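(* Let $A$ be a finite alphabet with $|A|\ge 2$ and $k \ge 1$. Let $\mathcal{R}$ be the set of reduced words over $\tilde A$ and $\mathcal{R}_{\le n}$ those of length at most $n$. Let $\mathbb{P}_n$ be the uniform probability law on $\mathcal{R}_{\le n}^k$. Let $T$ be the set of subgroups of $F(A)$ of the form $\langle\vec h\rangle$ with $\vec h \in \mathcal{R}^k$, let $T_n = \{\langle \vec h\rangle \mid \vec h\in \mathcal{R}_{\le n}^k\}$, and let $\mathbb{Q}_n$ be the uniform probability law on $T_n$. Let $X\subseteq T$ and $Y = \{\vec h\in\mathcal{R}^k \mid \langle\vec h\rangle\in X\}$. Then: if $\lim_n\mathbb{P}_n(Y) = 0$, then $\lim_n \mathbb{Q}_n(X) = 0$; if $\mathbb{P}_n(Y) = \mathcal{O}(e^{-cn})$ for some $c>0$, then $\mathbb{Q}_n(X) = \mathcal{O}(e^{-c'n})$ for some $c'>0$. Likewise, if $\lim_n \mathbb{P}_n(Y) = 1$ then $\lim_n\mathbb{Q}_n(X) = 1$, and if $1-\mathbb{P}_n(Y) = \mathcal{O}(e^{-cn})$ for some $c>0$ then $1-\mathbb{Q}_n(X) = \mathcal{O}(e^{-c'n})$ for some $c'>0$.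
   Context: $F(A)$ is the free group on $A$, identified with the set of reduced words over $\tilde A = A\cup\bar A$ ($\bar a$ representing $a^{-1}$); a word is reduced if it has no factor $a\bar a$ or $\bar a a$. For a tuple $\vec h = (h_1,\dots,h_k)$ of elements of $F(A)$, $\langle\vec h\rangle$ is the subgroup generated by $h_1,\dots,h_k$. *)

theory Defs
  imports "HOL-Algebra.Generated_Groups" "HOL-Library.Landau_Symbols" Complex_Main
begin

text \<open>Letters of the extended alphabet: (a, True) stands for a, (a, False) for its
  formal inverse a-bar.\<close>
type_synonym 'a letter = "'a \<times> bool"

definition inv_letter :: "'a letter \<Rightarrow> 'a letter" where
  "inv_letter x = (fst x, \<not> snd x)"

definition reduced :: "'a set \<Rightarrow> 'a letter list \<Rightarrow> bool" where
  "reduced A w \<longleftrightarrow> fst ` set w \<subseteq> A \<and>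
     (\<forall>i. Suc i < length w \<longrightarrow> w ! Suc i \<noteq> inv_letter (w ! i))"

definition reduced_words :: "'a set \<Rightarrow> 'a letter list set" where
  "reduced_words A = {w. reduced A w}"

definition reduced_words_le :: "'a set \<Rightarrow> nat \<Rightarrow> 'a letter list set" where
  "reduced_words_le A n = {w. reduced A w \<and> length w \<le> n}"

fun cancel :: "'a letter \<Rightarrow> 'a letter list \<Rightarrow> 'a letter list" where
  "cancel x [] = [x]"
| "cancel x (y # ys) = (if y = inv_letter x then ys else x # y # ys)"

definition reduce :: "'a letter list \<Rightarrow> 'a letter list" where
  "reduce w = foldr cancel w []"

definition free_group :: "'a set \<Rightarrow> 'a letter list monoid" where
  "free_group A = \<lparr>carrier = reduced_words A, mult = (\<lambda>u v. reduce (u @ v)), one = []\<rparr>"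

definition gen_sub :: "'a set \<Rightarrow> 'a letter list list \<Rightarrow> 'a letter list set" where
  "gen_sub A hs = generate (free_group A) (set hs)"

definition tuples :: "'a set \<Rightarrow> nat \<Rightarrow> 'a letter list list set" where
  "tuples A k = {hs. length hs = k \<and> set hs \<subseteq> reduced_words A}"

definition tuples_le :: "'a set \<Rightarrow> nat \<Rightarrow> nat \<Rightarrow> 'a letter list list set" where
  "tuples_le A k n = {hs. length hs = k \<and> set hs \<subseteq> reduced_words_le A n}"

definition subgroups_T :: "'a set \<Rightarrow> nat \<Rightarrow> 'a letter list set set" where
  "subgroups_T A k = gen_sub A ` tuples A k"

definition subgroups_T_le :: "'a set \<Rightarrow> nat \<Rightarrow> nat \<Rightarrow> 'a letter list set set" where
  "subgroups_T_le A k n = gen_sub A ` tuples_le A k n"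

definition Pn :: "'a set \<Rightarrow> nat \<Rightarrow> nat \<Rightarrow> 'a letter list list set \<Rightarrow> real" where
  "Pn A k n Y = real (card (Y \<inter> tuples_le A k n)) / real (card (tuples_le A k n))"

definition Qn :: "'a set \<Rightarrow> nat \<Rightarrow> nat \<Rightarrow> 'a letter list set set \<Rightarrow> real" where
  "Qn A k n X = real (card (X \<inter> subgroups_T_le A k n)) / real (card (subgroups_T_le A k n))"

end

theory Submission imports Defs begin

fun red :: "'a letter list \<Rightarrow> bool" where
  "red [] = True" | "red [x] = True"
| "red (x # y # ys) = (y \<noteq> inv_letter x \<and> red (y # ys))"

lemma inv_inv[simp]: "inv_letter (inv_letter x) = x"
  by (simp add: inv_letter_def)

lemma red_iff: "red w \<longleftrightarrow> (\<forall>i. Suc i < length w \<longrightarrow> w ! Suc i \<noteq> inv_letter (w ! i))"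
proof (induction w rule: red.induct)
  case (3 x y ys)
  show ?case
  proof
    assume "red (x # y # ys)"
    then show "\<forall>i. Suc i < length (x # y # ys) \<longrightarrow> (x # y # ys) ! Suc i \<noteq> inv_letter ((x # y # ys) ! i)"
      using 3 by (auto simp: nth_Cons split: nat.splits)
  next
    assume H: "\<forall>i. Suc i < length (x # y # ys) \<longrightarrow> (x # y # ys) ! Suc i \<noteq> inv_letter ((x # y # ys) ! i)"
    have "y \<noteq> inv_letter x" using H[rule_format, of 0] by simp
    moreover have "red (y # ys)" using 3 H[rule_format, of "Suc i" for i] by auto
    ultimately show "red (x # y # ys)" by simp
  qed
qed auto

lemma reduced_iff: "reduced A w \<longleftrightarrow> fst ` set w \<subseteq> A \<and> red w"
  unfolding reduced_def red_iff by simp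

lemma red_Cons: "red (x # w) \<longleftrightarrow> red w \<and> (w \<noteq> [] \<longrightarrow> hd w \<noteq> inv_letter x)"
  by (cases w) auto

lemma red_append: "red (u @ v) \<longleftrightarrow> red u \<and> red v \<and> (u \<noteq> [] \<longrightarrow> v \<noteq> [] \<longrightarrow> hd v \<noteq> inv_letter (last u))"
  by (induction u rule: red.induct) (auto simp: red_Cons)

lemma cancel_eq: "cancel x w = (if w \<noteq> [] \<and> hd w = inv_letter x then tl w else x # w)"
  by (cases w) auto

lemma red_cancel: "red w \<Longrightarrow> red (cancel x w)"
  by (cases w) (auto simp: red_Cons)

lemma red_foldr: "red w \<Longrightarrow> red (foldr cancel u w)"
  by (induction u) (auto intro: red_cancel)

lemma set_cancel: "set (cancel x w) \<subseteq> insert x (set w)"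
  by (cases w) auto

lemma set_foldr: "set (foldr cancel u w) \<subseteq> set u \<union> set w"
  by (induction u) (use set_cancel in fastforce)+

lemma reduce_red: "red w \<Longrightarrow> reduce w = w"
  unfolding reduce_def by (induction w) (auto simp: red_Cons cancel_eq)

lemma cancel_cancel: "red z \<Longrightarrow> cancel x (cancel (inv_letter x) z) = z"
  by (cases z) (auto simp: red_Cons cancel_eq)

definition invw :: "'a letter list \<Rightarrow> 'a letter list" where
  "invw x = rev (map inv_letter x)"

lemma invw_invw[simp]: "invw (invw x) = x"
  by (simp add: invw_def rev_map comp_def)

lemma invw_Cons: "invw (a # x) = invw x @ [inv_letter a]"
  by (simp add: invw_def)

lemma foldr_cancel_inv: "red z \<Longrightarrow> foldr cancel x (foldr cancel (invw x) z) = z"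
proof (induction x arbitrary: z)
  case (Cons a x)
  have "foldr cancel (a # x) (foldr cancel (invw (a # x)) z)
      = cancel a (foldr cancel x (foldr cancel (invw x) (cancel (inv_letter a) z)))"
    by (simp add: invw_Cons)
  also have "\<dots> = cancel a (cancel (inv_letter a) z)"
    using Cons by (simp add: red_cancel)
  also have "\<dots> = z" using cancel_cancel[of z a] Cons.prems by simp
  finally show ?case .
qed (simp add: invw_def)

lemma foldr_reduce: "red w \<Longrightarrow> foldr cancel (reduce u) w = foldr cancel u w"
proof (induction u arbitrary: w)
  case Nil then show ?case by (simp add: reduce_def)
next
  case (Cons x u)
  define r where "r = reduce u"
  have rr: "red r" unfolding r_def reduce_def by (rule red_foldr) simp
  have ru: "reduce (x # u) = cancel x r" by (simp add: r_def reduce_def)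
  show ?case
  proof (cases "r \<noteq> [] \<and> hd r = inv_letter x")
    case True
    then obtain ys where r: "r = inv_letter x # ys" by (cases r) auto
    have "foldr cancel (reduce (x # u)) w = foldr cancel ys w" using ru r by simp
    also have "\<dots> = cancel x (cancel (inv_letter x) (foldr cancel ys w))"
      using cancel_cancel red_foldr Cons.prems by metis
    also have "\<dots> = cancel x (foldr cancel r w)" using r by simp
    also have "\<dots> = foldr cancel (x # u) w" using Cons r_def by simp
    finally show ?thesis .
  next
    case False
    then have "cancel x r = x # r" by (cases r) auto
    then show ?thesis using ru Cons r_def by simp
  qed
qed

lemma reduce_append: "reduce (u @ v) = foldr cancel u (reduce v)"
  by (simp add: reduce_def)

lemma red_reduce: "red (reduce u)"
  unfolding reduce_def by (rule red_foldr) simp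

lemma reduce_left: "reduce (reduce u @ v) = reduce (u @ v)"
  by (simp add: reduce_append foldr_reduce red_reduce)

lemma reduce_right: "reduce (u @ reduce v) = reduce (u @ v)"
  by (simp add: reduce_append reduce_red red_reduce)

lemma set_reduce: "set (reduce u) \<subseteq> set u"
  unfolding reduce_def using set_foldr by fastforce


lemma fg_mult: "x \<otimes>\<^bsub>free_group A\<^esub> y = reduce (x @ y)"
  by (simp add: free_group_def)
lemma fg_one: "\<one>\<^bsub>free_group A\<^esub> = []"
  by (simp add: free_group_def)
lemma fg_carrier: "carrier (free_group A) = reduced_words A"
  by (simp add: free_group_def)

lemma set_invw: "set (invw x) = inv_letter ` set x"
  by (simp add: invw_def)

lemma fst_inv_letter[simp]: "fst (inv_letter x) = fst x"
  by (simp add: inv_letter_def)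

lemma fg_inv: assumes "h \<in> reduced_words A"
  shows "inv\<^bsub>free_group A\<^esub> h = reduce (invw h)"
proof -
  have hr: "red h" "fst ` set h \<subseteq> A" using assms by (auto simp: reduced_words_def reduced_iff)
  have c: "reduce (invw h) \<in> reduced_words A"
    using set_reduce[of "invw h"] hr(2) red_reduce[of "invw h"]
    unfolding reduced_words_def reduced_iff set_invw
    by (smt (verit, best) fst_inv_letter image_iff mem_Collect_eq subset_iff)
  have e1: "reduce (h @ reduce (invw h)) = []"
    using foldr_cancel_inv[of "[]" h] by (simp add: reduce_right reduce_append reduce_red red_reduce, simp add: reduce_def)
  have e2: "reduce (reduce (invw h) @ h) = []"
    using foldr_cancel_inv[of "[]" "invw h"] reduce_red[OF hr(1)]
    by (simp add: reduce_left reduce_append hr foldr_reduce, simp add: reduce_def)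
  show ?thesis unfolding m_inv_def fg_mult fg_one fg_carrier
  proof (rule the_equality)
    show "reduce (invw h) \<in> reduced_words A \<and> reduce (h @ reduce (invw h)) = [] \<and> reduce (reduce (invw h) @ h) = []"
      using c e1 e2 by simp
  next
    fix y assume y: "y \<in> reduced_words A \<and> reduce (h @ y) = [] \<and> reduce (y @ h) = []"
    then have ry: "red y" by (simp add: reduced_words_def reduced_iff)
    have "y = foldr cancel (invw h) (foldr cancel h y)"
      using foldr_cancel_inv[OF ry, of "invw h"] by simp
    also have "foldr cancel h y = reduce (h @ y)"
      by (simp add: reduce_append reduce_red ry)
    also have "\<dots> = []" using y by simp
    finally show "y = reduce (invw h)" by (simp add: reduce_def)
  qed
qed

lemma gen_repr:
  assumes gs: "set gs \<subseteq> reduced_words A"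
    and w: "w \<in> generate (free_group A) (set gs)"
  shows "\<exists>\<sigma>. set \<sigma> \<subseteq> set gs \<union> invw ` set gs \<and> w = reduce (concat \<sigma>)"
  using w
proof (induction rule: generate.induct)
  case one
  show ?case by (rule exI[of _ "[]"]) (simp add: fg_one reduce_def)
next
  case (incl h)
  then have "red h" using gs by (auto simp: reduced_words_def reduced_iff)
  then show ?case using incl by (intro exI[of _ "[h]"]) (simp add: reduce_red)
next
  case (inv h)
  then show ?case using gs fg_inv[of h A] by (intro exI[of _ "[invw h]"]) auto
next
  case (eng h1 h2)
  then obtain s1 s2 where "set s1 \<subseteq> set gs \<union> invw ` set gs" "h1 = reduce (concat s1)"
    "set s2 \<subseteq> set gs \<union> invw ` set gs" "h2 = reduce (concat s2)" by blast
  then show ?case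
    by (intro exI[of _ "s1 @ s2"]) (simp add: fg_mult reduce_left reduce_right)
qed

fun scancel :: "'a letter list \<Rightarrow> 'a letter list list \<Rightarrow> 'a letter list list" where
  "scancel x [] = [x]"
| "scancel x (y # ys) = (if y = invw x then ys else x # y # ys)"

definition sred :: "'a letter list list \<Rightarrow> 'a letter list list" where
  "sred s = foldr scancel s []"

fun sredp :: "'a letter list list \<Rightarrow> bool" where
  "sredp [] = True" | "sredp [x] = True"
| "sredp (x # y # ys) = (y \<noteq> invw x \<and> sredp (y # ys))"

lemma sredp_scancel: "sredp t \<Longrightarrow> sredp (scancel x t)"
  by (cases t rule: sredp.cases) auto

lemma sredp_sred: "sredp (sred s)"
  unfolding sred_def by (induction s) (auto intro: sredp_scancel)

lemma set_scancel: "set (scancel x t) \<subseteq> insert x (set t)"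
  by (cases t) auto

lemma set_sred: "set (sred s) \<subseteq> set s"
  unfolding sred_def by (induction s) (use set_scancel in fastforce)+

lemma reduce_scancel: "reduce (x @ concat t) = reduce (concat (scancel x t))"
proof (cases t)
  case (Cons y ys)
  show ?thesis
  proof (cases "y = invw x")
    case True
    have "reduce (x @ concat t) = foldr cancel x (foldr cancel (invw x) (reduce (concat ys)))"
      using Cons True by (simp add: reduce_append)
    also have "\<dots> = reduce (concat ys)" by (rule foldr_cancel_inv) (rule red_reduce)
    finally show ?thesis using Cons True by simp
  qed (use Cons in simp)
qed simp

lemma reduce_sred: "reduce (concat s) = reduce (concat (sred s))"
proof (induction s)
  case Nil then show ?case by (simp add: sred_def)
next
  case (Cons x s)
  have "reduce (concat (x # s)) = foldr cancel x (reduce (concat s))"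
    by (simp add: reduce_append)
  also have "\<dots> = foldr cancel x (reduce (concat (sred s)))" using Cons by simp
  also have "\<dots> = reduce (x @ concat (sred s))" by (simp add: reduce_append)
  also have "\<dots> = reduce (concat (sred (x # s)))"
    by (simp add: reduce_scancel sred_def)
  finally show ?case .
qed


lemma cancel_struct:
  assumes "red x" "red w"
  shows "\<exists>t \<le> length x. t \<le> length w \<and> take t w = invw (drop (length x - t) x)
     \<and> foldr cancel x w = take (length x - t) x @ drop t w"
  using assms(1)
proof (induction x)
  case Nil then show ?case by (simp add: invw_def)
next
  case (Cons a x)
  have rx: "red x" and ha: "x \<noteq> [] \<Longrightarrow> hd x \<noteq> inv_letter a" using Cons.prems by (auto simp: red_Cons)
  obtain t where t: "t \<le> length x" "t \<le> length w" "take t w = invw (drop (length x - t) x)"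
     "foldr cancel x w = take (length x - t) x @ drop t w" using Cons.IH[OF rx] by blast
  have fe: "foldr cancel (a # x) w = cancel a (take (length x - t) x @ drop t w)" using t(4) by simp
  show ?case
  proof (cases "t < length x")
    case True
    have "take (length x - t) x \<noteq> []" using True by (cases x) auto
    moreover have "hd (take (length x - t) x) = hd x" using True by (cases x) auto
    ultimately have "cancel a (take (length x - t) x @ drop t w) = a # take (length x - t) x @ drop t w"
      using ha True by (auto simp: cancel_eq)
    moreover have "length (a # x) - t = Suc (length x - t)" using True by simp
    ultimately show ?thesis using t True fe by (intro exI[of _ t]) auto
  next
    case False
    then have tx: "t = length x" using t by simp
    show ?thesis
    proof (cases "drop t w \<noteq> [] \<and> hd (drop t w) = inv_letter a")
      case True
      have tw: "t < length w" using True by simp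
      have "take (Suc t) w = take t w @ [w ! t]" using tw by (simp add: take_Suc_conv_app_nth)
      moreover have "w ! t = inv_letter a" using True tw by (simp add: hd_drop_conv_nth)
      ultimately have "take (Suc t) w = invw (a # x)" using t(3) tx by (simp add: invw_Cons)
      moreover have "foldr cancel (a # x) w = drop (Suc t) w"
        using fe True tx by (simp add: cancel_eq drop_Suc tl_drop)
      ultimately show ?thesis using tx tw by (intro exI[of _ "Suc t"]) auto
    next
      case False
      then have "foldr cancel (a # x) w = a # drop t w" using fe tx by (auto simp: cancel_eq)
      then show ?thesis using tx t by (intro exI[of _ t]) auto
    qed
  qed
qed

lemma take_invw_drop:
  assumes "k \<le> t" "t \<le> length x"
  shows "take k (invw (drop (length x - t) x)) = take k (invw x)"
proof -
  have "invw x = invw (drop (length x - t) x) @ invw (take (length x - t) x)"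
    by (metis append_take_drop_id invw_def map_append rev_append)
  moreover have "length (invw (drop (length x - t) x)) = t" using assms by (simp add: invw_def)
  ultimately show ?thesis using assms by simp
qed

lemma nielsen:
  assumes hS: "\<forall>x\<in>S. red x \<and> length x = N"
    and hinv: "\<forall>x\<in>S. invw x \<in> S"
    and hmark: "\<forall>x\<in>S. \<forall>y\<in>S. take k x = take k y \<longrightarrow> x = y"
    and hN: "2 * k < N"
  shows "s \<noteq> [] \<Longrightarrow> set s \<subseteq> S \<Longrightarrow> sredp s \<Longrightarrow>
    take k (reduce (concat s)) = take k (hd s) \<and>
    N * length s + 2 * k \<le> length (reduce (concat s)) + 2 * k * length s"
proof (induction s rule: sredp.induct)
  case (2 x)
  then have "red x" "length x = N" using hS by auto
  then show ?case by (simp add: reduce_red)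
next
  case (3 x y ys)
  define w0 where "w0 = reduce (concat (y # ys))"
  have IH: "take k w0 = take k y" "N * length (y # ys) + 2 * k \<le> length w0 + 2 * k * length (y # ys)"
    using 3 unfolding w0_def by auto
  have xS: "x \<in> S" and yS: "y \<in> S" and yx: "y \<noteq> invw x" using 3 by auto
  have rx: "red x" and lx: "length x = N" using hS xS by auto
  have rw0: "red w0" unfolding w0_def by (rule red_reduce)
  have e: "reduce (concat (x # y # ys)) = foldr cancel x w0"
    by (simp add: w0_def reduce_append del: concat.simps) (simp add: reduce_append)
  obtain t where t: "t \<le> length x" "t \<le> length w0" "take t w0 = invw (drop (length x - t) x)"
     "foldr cancel x w0 = take (length x - t) x @ drop t w0" using cancel_struct[OF rx rw0] by blast
  have tk: "t < k"
  proof (rule ccontr)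
    assume "\<not> t < k"
    then have "take k w0 = take k (invw x)"
      using t take_invw_drop[of k t x] by (metis min.absorb1 not_less take_take)
    then have "take k y = take k (invw x)" using IH by simp
    then show False using hmark yS hinv xS yx by metis
  qed
  have "take k (foldr cancel x w0) = take k x" using t tk lx hN by simp
  moreover have "length (foldr cancel x w0) = N - t + (length w0 - t)" using t lx by simp
  ultimately show ?case using e IH t tk lx hN by (auto simp: algebra_simps)
qed simp

lemma short_in_S:
  assumes gs: "set gs \<subseteq> reduced_words A"
    and hS: "\<forall>x\<in>S. red x \<and> length x = N"
    and hinv: "\<forall>x\<in>S. invw x \<in> S"
    and hmark: "\<forall>x\<in>S. \<forall>y\<in>S. take k x = take k y \<longrightarrow> x = y"
    and hN: "2 * k < N"
    and Sdef: "S = set gs \<union> invw ` set gs"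
    and w: "w \<in> generate (free_group A) (set gs)" "w \<noteq> []" "length w \<le> N"
  shows "w \<in> S"
proof -
  obtain s where s: "set s \<subseteq> S" "w = reduce (concat s)" using gen_repr[OF gs w(1)] Sdef by blast
  define s' where "s' = sred s"
  have s': "set s' \<subseteq> S" "sredp s'" "w = reduce (concat s')"
    using s set_sred sredp_sred reduce_sred s'_def by blast+
  have "s' \<noteq> []" using s' w(2) by (auto simp: reduce_def)
  then have B: "N * length s' + 2 * k \<le> length w + 2 * k * length s'"
    using nielsen[OF hS hinv hmark hN, of s'] s' by auto
  show ?thesis
  proof (cases "length s' \<ge> 2")
    case True
    define m where "m = length s' - 1"
    have m: "length s' = Suc m" "m \<ge> 1" using True m_def by auto
    have "N * m + N + 2 * k \<le> length w + 2 * k * m + 2 * k" using B m(1) by (simp add: algebra_simps)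
    then have "N * m \<le> 2 * k * m" using w(3) by linarith
    moreover have "2 * k * m < N * m" using hN m(2) by simp
    ultimately show ?thesis by simp
  next
    case False
    with \<open>s' \<noteq> []\<close> obtain x where "s' = [x]" by (cases s'; cases "tl s'") auto
    then show ?thesis using s' hS by (auto simp: reduce_red)
  qed
qed


definition code :: "'a \<Rightarrow> 'a \<Rightarrow> nat \<Rightarrow> nat \<Rightarrow> 'a letter list" where
  "code a b k j = replicate j (a, True) @ replicate (k - j) (b, True)"

definition ad :: "'a \<Rightarrow> 'a \<Rightarrow> 'a letter \<Rightarrow> 'a letter" where
  "ad a b c = (if c = (a, False) then (b, True) else (a, True))"

definition gen :: "'a \<Rightarrow> 'a \<Rightarrow> nat \<Rightarrow> nat \<Rightarrow> 'a letter list \<Rightarrow> 'a letter list" where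
  "gen a b k j h = code a b k j @ [ad a b (hd h)] @ h @ [ad a b (last h)] @ code a b k j"

definition mkt :: "'a \<Rightarrow> 'a \<Rightarrow> nat \<Rightarrow> 'a letter list list \<Rightarrow> 'a letter list list" where
  "mkt a b k hs = map (\<lambda>j. gen a b k j (hs ! j)) [0..<k]"

lemma red_pos: "\<forall>x\<in>set w. snd x \<Longrightarrow> red w"
  by (induction w rule: red.induct) (auto simp: inv_letter_def)

lemma len_code[simp]: "j \<le> k \<Longrightarrow> length (code a b k j) = k"
  by (simp add: code_def)

lemma set_code: "set (code a b k j) \<subseteq> {(a, True), (b, True)}"
  by (auto simp: code_def)

lemma code_inj: assumes "a \<noteq> b" "i \<le> k" "j \<le> k" "code a b k i = code a b k j" shows "i = j"
proof -
  have "\<And>i. i \<le> k \<Longrightarrow> length (filter (\<lambda>x. x = (a, True)) (code a b k i)) = i"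
    using assms(1) by (simp add: code_def filter_replicate)
  then show ?thesis using assms by metis
qed

lemma invw_append: "invw (u @ v) = invw v @ invw u"
  by (simp add: invw_def)

lemma red_invw: "red x \<Longrightarrow> red (invw x)"
proof (induction x)
  case (Cons a x)
  have rx: "red x" and hx: "x \<noteq> [] \<Longrightarrow> hd x \<noteq> inv_letter a" using Cons.prems by (auto simp: red_Cons)
  have l: "x \<noteq> [] \<Longrightarrow> last (invw x) = inv_letter (hd x)"
    by (simp add: invw_def last_rev hd_map)
  have ne: "x \<noteq> [] \<Longrightarrow> inv_letter a \<noteq> inv_letter (last (invw x))"
    using hx l by (metis inv_inv)
  have "invw x \<noteq> [] \<Longrightarrow> x \<noteq> []" by (auto simp: invw_def)
  then show ?case using Cons.IH[OF rx] ne by (auto simp: invw_Cons red_append)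
qed (simp add: invw_def)

lemma length_invw[simp]: "length (invw x) = length x"
  by (simp add: invw_def)

lemma red_gen: assumes "a \<noteq> b" "red h" shows "red (gen a b k j h)"
proof -
  have p: "\<forall>x\<in>set (code a b k j). snd x" using set_code by fastforce
  have c: "red (code a b k j)" by (rule red_pos[OF p])
  have pad: "\<And>c. snd (ad a b c)" by (simp add: ad_def)
  have h1: "h \<noteq> [] \<Longrightarrow> hd h \<noteq> inv_letter (ad a b (hd h))"
    using assms(1) by (auto simp: ad_def inv_letter_def)
  have h2: "h \<noteq> [] \<Longrightarrow> ad a b (last h) \<noteq> inv_letter (last h)"
    using assms(1) by (cases "last h") (auto simp: ad_def inv_letter_def)
  have "\<And>x y. snd x \<Longrightarrow> snd y \<Longrightarrow> y \<noteq> inv_letter x" by (auto simp: inv_letter_def)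
  note q = this
  have cne: "code a b k j \<noteq> [] \<Longrightarrow> snd (hd (code a b k j)) \<and> snd (last (code a b k j))"
    using p by auto
  define c0 where "c0 = code a b k j"
  define a1 where "a1 = ad a b (hd h)"
  define a2 where "a2 = ad a b (last h)"
  have r1: "red (a1 # h)" using h1 assms(2) by (simp add: red_Cons a1_def)
  have r2: "red (a2 # c0)" using c cne q pad unfolding red_Cons c0_def a2_def by metis
  have sn: "\<And>x. snd (inv_letter x) = (\<not> snd x)" by (simp add: inv_letter_def)
  have l1: "a2 \<noteq> inv_letter (last (a1 # h))"
  proof (cases "h = []")
    case True
    then show ?thesis using pad sn unfolding a1_def a2_def by (metis last_ConsL)
  next
    case False
    then show ?thesis using h2 unfolding a2_def by simp
  qed
  have r12: "red ((a1 # h) @ (a2 # c0))" using r1 r2 l1 by (simp only: red_append) simp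
  have l2: "c0 \<noteq> [] \<Longrightarrow> a1 \<noteq> inv_letter (last c0)"
    using cne pad sn unfolding c0_def a1_def by metis
  have "red (c0 @ ((a1 # h) @ (a2 # c0)))"
    using r12 c l2 unfolding red_append[of c0] by (simp add: c0_def)
  then show ?thesis unfolding gen_def c0_def a1_def a2_def by simp
qed

lemma take_gen: "j \<le> k \<Longrightarrow> take k (gen a b k j h) = code a b k j"
  by (simp add: gen_def)

lemma take_invw_gen: "j \<le> k \<Longrightarrow> take k (invw (gen a b k j h)) = invw (code a b k j)"
proof -
  assume j: "j \<le> k"
  have "gen a b k j h = (code a b k j @ [ad a b (hd h)] @ h @ [ad a b (last h)]) @ code a b k j"
    by (simp add: gen_def)
  then have "invw (gen a b k j h) = invw (code a b k j) @ invw (code a b k j @ [ad a b (hd h)] @ h @ [ad a b (last h)])"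
    by (simp only: invw_append)
  then show ?thesis using j by simp
qed

lemma length_gen: "j \<le> k \<Longrightarrow> length (gen a b k j h) = 2 * k + 2 + length h"
  by (simp add: gen_def)

lemma code_ne_invw: assumes "k \<ge> 1" "i \<le> k" "j \<le> k" shows "code a b k i \<noteq> invw (code a b k j)"
proof
  assume e: "code a b k i = invw (code a b k j)"
  have "code a b k i \<noteq> []" using assms by (metis len_code list.size(3) not_one_le_zero)
  then obtain x where x: "x \<in> set (code a b k i)" by (meson list.set_sel(1))
  then have "snd x" using set_code by fastforce
  moreover have "x \<in> inv_letter ` set (code a b k j)" using x e by (simp add: set_invw)
  then have "\<not> snd x" using set_code by (fastforce simp: inv_letter_def)
  ultimately show False by simp
qed

lemma invw_inj: "invw x = invw y \<Longrightarrow> x = y"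
  by (metis invw_invw)


definition Rl :: "'a set \<Rightarrow> nat \<Rightarrow> 'a letter list set" where
  "Rl A l = {w. reduced A w \<and> length w = l}"

definition HL :: "'a set \<Rightarrow> nat \<Rightarrow> nat \<Rightarrow> 'a letter list list set" where
  "HL A k L = {xs. set xs \<subseteq> Rl A L \<and> length xs = k}"

lemma reduced_gen:
  assumes "a \<noteq> b" "a \<in> A" "b \<in> A" "reduced A h"
  shows "reduced A (gen a b k j h)"
proof -
  have "red h" "fst ` set h \<subseteq> A" using assms(4) by (auto simp: reduced_iff)
  moreover have "fst ` set (code a b k j) \<subseteq> A" using set_code[of a b k j] assms by auto
  moreover have "\<And>c. fst (ad a b c) \<in> A" using assms by (simp add: ad_def)
  ultimately show ?thesis using red_gen[OF assms(1)] by (auto simp: reduced_iff gen_def)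
qed

lemma gen_take_drop: "j \<le> k \<Longrightarrow> take (length h) (drop (Suc k) (gen a b k j h)) = h"
  by (simp add: gen_def)

lemma nth_mkt: "j < k \<Longrightarrow> mkt a b k hs ! j = gen a b k j (hs ! j)"
  by (simp add: mkt_def)

lemma set_mkt: "set (mkt a b k hs) = {gen a b k j (hs ! j) | j. j < k}"
  by (auto simp: mkt_def)

locale fam =
  fixes A :: "'a set" and a b :: 'a and k L :: nat
  assumes ab: "a \<noteq> b" "a \<in> A" "b \<in> A" and k1: "k \<ge> 1"
begin

definition N where "N = 2 * k + 2 + L"

lemma lg: "j < k \<Longrightarrow> length (gen a b k j h) = 2 * k + 2 + length h"
  using length_gen[of j k] by simp

lemma mkt_tuples: assumes "hs \<in> HL A k L" shows "mkt a b k hs \<in> tuples_le A k N"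
proof -
  have "\<And>j. j < k \<Longrightarrow> hs ! j \<in> Rl A L" using assms by (auto simp: HL_def)
  then show ?thesis
    using reduced_gen[OF ab] lg
    by (auto simp: tuples_le_def reduced_words_le_def mkt_def Rl_def N_def)
qed

lemma mkt_key:
  assumes hs: "hs \<in> HL A k L"
    and w: "w \<in> gen_sub A (mkt a b k hs)" "w \<noteq> []" "length w \<le> N"
    and j: "j < k" "take k w = code a b k j"
  shows "w = gen a b k j (hs ! j)"
proof -
  define gs where "gs = mkt a b k hs"
  define S where "S = set gs \<union> invw ` set gs"
  have hR: "\<And>j. j < k \<Longrightarrow> hs ! j \<in> Rl A L" using hs by (auto simp: HL_def)
  have gs_red: "set gs \<subseteq> reduced_words A"
    using mkt_tuples[OF hs] by (auto simp: gs_def tuples_le_def reduced_words_le_def reduced_words_def)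
  have Sg: "set gs = {gen a b k j (hs ! j) | j. j < k}" by (simp add: gs_def set_mkt)
  have hS: "\<forall>x\<in>S. red x \<and> length x = N"
  proof
    fix x assume "x \<in> S"
    then obtain i where i: "i < k" "x = gen a b k i (hs ! i) \<or> x = invw (gen a b k i (hs ! i))"
      unfolding S_def Sg by blast
    have "red (gen a b k i (hs ! i))" "length (gen a b k i (hs ! i)) = N"
      using hR[OF i(1)] red_gen[OF ab(1)] length_gen[of i k] i(1)
      by (auto simp: Rl_def reduced_iff N_def)
    then show "red x \<and> length x = N" using i red_invw by auto
  qed
  have hinv: "\<forall>x\<in>S. invw x \<in> S" unfolding S_def by auto
  have hmark: "\<forall>x\<in>S. \<forall>y\<in>S. take k x = take k y \<longrightarrow> x = y"
  proof (intro ballI impI)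
    fix x y assume "x \<in> S" "y \<in> S" and e: "take k x = take k y"
    then obtain i i' where i: "i < k" "x = gen a b k i (hs ! i) \<or> x = invw (gen a b k i (hs ! i))"
      and i': "i' < k" "y = gen a b k i' (hs ! i') \<or> y = invw (gen a b k i' (hs ! i'))"
      unfolding S_def Sg by blast
    show "x = y"
      using i i' e take_gen[of _ k a b] take_invw_gen[of _ k a b] code_inj[OF ab(1), of _ k]
        code_ne_invw[OF k1, of _ _ a b] invw_inj
      by (smt (verit, ccfv_SIG) less_imp_le_nat)
  qed
  have hN: "2 * k < N" by (simp add: N_def)
  have wS: "w \<in> S"
    using short_in_S[OF gs_red hS hinv hmark hN S_def] w unfolding gs_def gen_sub_def by blast
  then obtain i where i: "i < k" "w = gen a b k i (hs ! i) \<or> w = invw (gen a b k i (hs ! i))"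
    unfolding S_def Sg by blast
  show ?thesis
    using i j take_gen[of _ k a b] take_invw_gen[of _ k a b] code_inj[OF ab(1), of _ k]
        code_ne_invw[OF k1, of _ _ a b]
    by (metis less_imp_le_nat)
qed

lemma gen_sub_inj: "inj_on (\<lambda>hs. gen_sub A (mkt a b k hs)) (HL A k L)"
proof (rule inj_onI)
  fix hs hs' assume hs: "hs \<in> HL A k L" and hs': "hs' \<in> HL A k L"
    and e: "gen_sub A (mkt a b k hs) = gen_sub A (mkt a b k hs')"
  have len: "length hs = k" "length hs' = k" using hs hs' by (auto simp: HL_def)
  have "\<And>j. j < k \<Longrightarrow> hs ! j = hs' ! j"
  proof -
    fix j assume j: "j < k"
    define w where "w = gen a b k j (hs' ! j)"
    have "w \<in> set (mkt a b k hs')" using j by (auto simp: w_def set_mkt)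
    then have "w \<in> gen_sub A (mkt a b k hs)" using e by (simp add: gen_sub_def generate.incl)
    moreover have "length (hs' ! j) = L" using hs' j by (auto simp: HL_def Rl_def dest!: nth_mem)
    then have "length w = N" using j lg by (simp add: w_def N_def)
    moreover have "take k w = code a b k j" using j by (simp add: w_def take_gen)
    moreover have "w \<noteq> []" using calculation(2) by (auto simp: N_def)
    ultimately have "w = gen a b k j (hs ! j)"
      using mkt_key[OF hs _ _ _ j] by simp
    then have "take L (drop (Suc k) w) = take L (drop (Suc k) (gen a b k j (hs ! j)))" by simp
    moreover have "length (hs ! j) = L" using hs j
      by (auto simp: HL_def Rl_def dest!: nth_mem)
    moreover have "hs' ! j \<in> set hs'" using j len by simp
    then have "length (hs' ! j) = L" using hs' by (auto simp: HL_def Rl_def)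
    ultimately show "hs ! j = hs' ! j" using gen_take_drop[of j k] j unfolding w_def by (metis less_imp_le_nat)
  qed
  then show "hs = hs'" using len by (simp add: nth_equalityI)
qed

lemma card_T_lower: assumes "finite A"
  shows "card (Rl A L) ^ k \<le> card (subgroups_T_le A k N)"
proof -
  have fin: "finite (tuples_le A k N)"
  proof -
    have "reduced_words_le A N \<subseteq> {w. set w \<subseteq> A \<times> UNIV \<and> length w \<le> N}"
      by (auto simp: reduced_words_le_def reduced_def)
    moreover have "finite {w. set w \<subseteq> A \<times> (UNIV::bool set) \<and> length w \<le> N}"
      using assms by (intro finite_lists_length_le) auto
    ultimately have "finite (reduced_words_le A N)" using finite_subset by blast
    then have "finite {xs. set xs \<subseteq> reduced_words_le A N \<and> length xs = k}"
      by (rule finite_lists_length_eq)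
    moreover have "tuples_le A k N = {xs. set xs \<subseteq> reduced_words_le A N \<and> length xs = k}"
      by (auto simp: tuples_le_def)
    ultimately show ?thesis by simp
  qed
  have "card (Rl A L) ^ k = card (HL A k L)"
  proof -
    have "finite (Rl A L)"
    proof -
      have "Rl A L \<subseteq> {w. set w \<subseteq> A \<times> UNIV \<and> length w = L}" by (auto simp: Rl_def reduced_def)
      moreover have "finite {w. set w \<subseteq> A \<times> (UNIV::bool set) \<and> length w = L}"
        using assms by (intro finite_lists_length_eq) auto
      ultimately show ?thesis using finite_subset by blast
    qed
    then show ?thesis by (simp add: HL_def card_lists_length_eq)
  qed
  also have "\<dots> = card ((\<lambda>hs. gen_sub A (mkt a b k hs)) ` HL A k L)"
    using gen_sub_inj by (simp add: card_image)
  also have "\<dots> \<le> card (subgroups_T_le A k N)"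
  proof (rule card_mono)
    show "finite (subgroups_T_le A k N)" using fin by (simp add: subgroups_T_le_def)
    show "(\<lambda>hs. gen_sub A (mkt a b k hs)) ` HL A k L \<subseteq> subgroups_T_le A k N"
      using mkt_tuples by (auto simp: subgroups_T_le_def)
  qed
  finally show ?thesis .
qed

end


lemma finite_Rl: "finite A \<Longrightarrow> finite (Rl A l)"
proof -
  assume fA: "finite A"
  have "Rl A l \<subseteq> {w. set w \<subseteq> A \<times> UNIV \<and> length w = l}" by (auto simp: Rl_def reduced_def)
  moreover have "finite {w. set w \<subseteq> A \<times> (UNIV::bool set) \<and> length w = l}"
    using fA by (intro finite_lists_length_eq) auto
  ultimately show ?thesis using finite_subset by blast
qed

lemma finite_rwle: "finite A \<Longrightarrow> finite (reduced_words_le A n)"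
proof -
  assume fA: "finite A"
  have "reduced_words_le A n \<subseteq> {w. set w \<subseteq> A \<times> UNIV \<and> length w \<le> n}"
    by (auto simp: reduced_words_le_def reduced_def)
  moreover have "finite {w. set w \<subseteq> A \<times> (UNIV::bool set) \<and> length w \<le> n}"
    using fA by (intro finite_lists_length_le) auto
  ultimately show ?thesis using finite_subset by blast
qed

lemma tuples_le_eq: "tuples_le A k n = {xs. set xs \<subseteq> reduced_words_le A n \<and> length xs = k}"
  by (auto simp: tuples_le_def)

lemma finite_tuples_le: "finite A \<Longrightarrow> finite (tuples_le A k n)"
  unfolding tuples_le_eq by (rule finite_lists_length_eq) (rule finite_rwle)

lemma card_tuples_le: "finite A \<Longrightarrow> card (tuples_le A k n) = card (reduced_words_le A n) ^ k"
  unfolding tuples_le_eq by (rule card_lists_length_eq) (rule finite_rwle)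

lemma Rl_Suc_upper: assumes "finite A" shows "card (Rl A (Suc l)) \<le> 2 * card A * card (Rl A l)"
proof -
  have "Rl A (Suc l) \<subseteq> (\<lambda>(w, x). w @ [x]) ` (Rl A l \<times> (A \<times> UNIV))"
  proof
    fix w assume w: "w \<in> Rl A (Suc l)"
    then have ne: "w \<noteq> []" by (auto simp: Rl_def)
    have e: "w = butlast w @ [last w]" using ne by simp
    have "red w" "fst ` set w \<subseteq> A" using w by (auto simp: Rl_def reduced_iff)
    then have bw: "red (butlast w)" "fst ` set (butlast w) \<subseteq> A"
      using e red_append[of "butlast w" "[last w]"] ne
      by (auto dest: in_set_butlastD)
    have "fst (last w) \<in> A" using \<open>fst ` set w \<subseteq> A\<close> last_in_set[OF ne] by blast
    then have "butlast w \<in> Rl A l" "last w \<in> A \<times> UNIV" using w bw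
      by (auto simp: Rl_def reduced_iff mem_Times_iff)
    then show "w \<in> (\<lambda>(w, x). w @ [x]) ` (Rl A l \<times> (A \<times> UNIV))"
      using e by (auto intro!: image_eqI[of _ _ "(butlast w, last w)"])
  qed
  then have "card (Rl A (Suc l)) \<le> card ((\<lambda>(w, x). w @ [x]) ` (Rl A l \<times> (A \<times> (UNIV :: bool set))))"
    using assms finite_Rl[OF assms] by (intro card_mono) (auto intro!: finite_imageI finite_cartesian_product)
  also have "\<dots> \<le> card (Rl A l \<times> (A \<times> (UNIV :: bool set)))" by (rule card_image_le) (use assms finite_Rl[OF assms] in \<open>auto intro!: finite_cartesian_product\<close>)
  also have "\<dots> = 2 * card A * card (Rl A l)" by (simp add: card_cartesian_product)
  finally show ?thesis .
qed

lemma Rl_Suc_lower: assumes "finite A" "a \<noteq> b" "a \<in> A" "b \<in> A"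
  shows "2 * card (Rl A l) \<le> card (Rl A (Suc l))"
proof -
  define e where "e = (\<lambda>(w, i). w @ [(if i then a else b, \<not> (w \<noteq> [] \<and> \<not> snd (last w)))])"
  have inj: "inj_on e (Rl A l \<times> (UNIV :: bool set))"
    unfolding e_def using assms(2) by (auto simp: inj_on_def split: if_splits)
  have sub: "e ` (Rl A l \<times> UNIV) \<subseteq> Rl A (Suc l)"
  proof clarify
    fix w i assume w: "w \<in> Rl A l"
    have "red w" "fst ` set w \<subseteq> A" "length w = l" using w by (auto simp: Rl_def reduced_iff)
    moreover have "w \<noteq> [] \<Longrightarrow> (if i then a else b, \<not> (w \<noteq> [] \<and> \<not> snd (last w))) \<noteq> inv_letter (last w)"
      by (auto simp: inv_letter_def)
    ultimately show "e (w, i) \<in> Rl A (Suc l)"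
      using assms by (auto simp: e_def Rl_def reduced_iff red_append)
  qed
  have "2 * card (Rl A l) = card (Rl A l \<times> (UNIV :: bool set))" by (simp add: card_cartesian_product)
  also have "\<dots> \<le> card (Rl A (Suc l))"
    using card_inj_on_le[OF inj sub] finite_Rl[OF assms(1)] by simp
  finally show ?thesis .
qed

lemma Rl_0: "Rl A 0 = {[]}"
  by (auto simp: Rl_def reduced_def)

lemma rwle_bound: assumes "finite A" "a \<noteq> b" "a \<in> A" "b \<in> A"
  shows "card (reduced_words_le A n) \<le> 2 * card (Rl A n)"
proof (induction n)
  case 0
  have "reduced_words_le A 0 = {[]}" by (auto simp: reduced_words_le_def reduced_def)
  then show ?case by (simp add: Rl_0)
next
  case (Suc n)
  have "reduced_words_le A (Suc n) = reduced_words_le A n \<union> Rl A (Suc n)"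
    by (auto simp: reduced_words_le_def Rl_def)
  then have "card (reduced_words_le A (Suc n)) \<le> card (reduced_words_le A n) + card (Rl A (Suc n))"
    by (simp add: card_Un_le)
  then show ?case using Suc Rl_Suc_lower[OF assms, of n] by linarith
qed

lemma Rl_shift: assumes "finite A"
  shows "card (Rl A (n + d)) \<le> (2 * card A) ^ d * card (Rl A n)"
proof (induction d)
  case (Suc d)
  have "card (Rl A (n + Suc d)) \<le> 2 * card A * card (Rl A (n + d))"
    using Rl_Suc_upper[OF assms, of "n + d"] by simp
  also have "\<dots> \<le> 2 * card A * ((2 * card A) ^ d * card (Rl A n))"
    using Suc by simp
  finally show ?case by (simp add: algebra_simps)
qed simp

lemma Rl_nonempty: assumes "finite A" "a \<in> A" shows "card (Rl A l) \<ge> 1"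
proof -
  have "replicate l (a, True) \<in> Rl A l"
    using assms red_pos[of "replicate l (a, True)"] by (auto simp: Rl_def reduced_iff)
  then show ?thesis using finite_Rl[OF assms(1)]
    by (metis One_nat_def Suc_leI card_gt_0_iff empty_iff)
qed


lemma preimage_card: assumes "finite U" shows "card (g ` U \<inter> Z) \<le> card (U \<inter> g -` Z)"
proof -
  have "g ` U \<inter> Z = g ` (U \<inter> g -` Z)" by auto
  then show ?thesis using assms by (simp add: card_image_le)
qed

lemma ratio: fixes x y t u C :: real
  assumes "0 < t" "0 < u" "u \<le> C * t" "0 \<le> x" "x \<le> y"
  shows "x / t \<le> C * (y / u)"
proof -
  have "x / t \<le> y / t" using assms by (simp add: divide_right_mono)
  also have "y / t = y * u / (t * u)" using assms by simp
  also have "\<dots> \<le> y * (C * t) / (t * u)"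
    using assms by (intro divide_right_mono mult_left_mono) auto
  also have "\<dots> = C * (y / u)" using assms by (simp add: field_simps)
  finally show ?thesis .
qed

lemma one_minus_ratio: assumes "finite T" "card T > 0"
  shows "1 - real (card (X \<inter> T)) / real (card T) = real (card (T - X)) / real (card T)"
proof -
  have "T = (X \<inter> T) \<union> (T - X)" by auto
  then have "card T = card (X \<inter> T) + card (T - X)" using assms(1)
    by (metis card_Un_disjoint Diff_disjoint finite_Diff finite_Int inf_commute Int_Diff_disjoint)
  then have e: "real (card T) = real (card (X \<inter> T)) + real (card (T - X))" by simp
  have "1 - real (card (X \<inter> T)) / real (card T) = (real (card T) - real (card (X \<inter> T))) / real (card T)"
    using assms(2) by (simp add: field_simps)
  then show ?thesis using e by simp
qed

lemma transfer:
  fixes f g :: "nat \<Rightarrow> real"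
  assumes ev: "eventually (\<lambda>n. 0 \<le> g n \<and> g n \<le> C * f n) sequentially" and C: "C > 0"
  shows "(f \<longlonglongrightarrow> 0 \<longrightarrow> g \<longlonglongrightarrow> 0) \<and>
    ((\<exists>c>0. f \<in> O(\<lambda>n. exp (- c * real n))) \<longrightarrow> (\<exists>c'>0. g \<in> O(\<lambda>n. exp (- c' * real n))))"
proof (intro conjI impI)
  assume "f \<longlonglongrightarrow> 0"
  then have "(\<lambda>n. C * f n) \<longlonglongrightarrow> 0" by (simp add: tendsto_mult_right_zero)
  then show "g \<longlonglongrightarrow> 0"
    by (rule tendsto_sandwich[rotated 2, OF tendsto_const]) (use ev in \<open>auto elim: eventually_mono\<close>)
next
  assume "\<exists>c>0. f \<in> O(\<lambda>n. exp (- c * real n))"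
  then obtain c where c: "c > 0" "f \<in> O(\<lambda>n. exp (- c * real n))" by blast
  have "g \<in> O(f)"
  proof (rule bigoI[of _ C])
    show "\<forall>\<^sub>F x in at_top. norm (g x) \<le> C * norm (f x)"
      using ev
      by (rule eventually_mono) (use C in \<open>auto intro: order_trans[OF _ mult_left_mono[OF abs_ge_self]]\<close>)
  qed
  then have "g \<in> O(\<lambda>n. exp (- c * real n))" using c(2) by (rule landau_o.big_trans)
  then show "\<exists>c'>0. g \<in> O(\<lambda>n. exp (- c' * real n))" using c(1) by blast
qed


theorem mainTheorem4:
  fixes A :: "'a set" and k :: nat and X :: "'a letter list set set"
  assumes "finite A" and "card A \<ge> 2" and "k \<ge> 1"
    and "X \<subseteq> subgroups_T A k"
  defines "Y \<equiv> {hs \<in> tuples A k. gen_sub A hs \<in> X}"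
  shows "((\<lambda>n. Pn A k n Y) \<longlonglongrightarrow> 0 \<longrightarrow> (\<lambda>n. Qn A k n X) \<longlonglongrightarrow> 0)
    \<and> ((\<exists>c>0. (\<lambda>n. Pn A k n Y) \<in> O(\<lambda>n. exp (- c * real n))) \<longrightarrow>
         (\<exists>c'>0. (\<lambda>n. Qn A k n X) \<in> O(\<lambda>n. exp (- c' * real n))))
    \<and> ((\<lambda>n. Pn A k n Y) \<longlonglongrightarrow> 1 \<longrightarrow> (\<lambda>n. Qn A k n X) \<longlonglongrightarrow> 1)
    \<and> ((\<exists>c>0. (\<lambda>n. 1 - Pn A k n Y) \<in> O(\<lambda>n. exp (- c * real n))) \<longrightarrow>
         (\<exists>c'>0. (\<lambda>n. 1 - Qn A k n X) \<in> O(\<lambda>n. exp (- c' * real n))))"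
proof -
  obtain a where a: "a \<in> A" using assms(2) by fastforce
  have "card (A - {a}) \<ge> 1" using assms(1,2) a by simp
  then have "A - {a} \<noteq> {}" by (metis card.empty not_one_le_zero)
  then obtain b where b: "b \<in> A" "b \<noteq> a" by blast
  define D where "D = 2 * k + 2"
  define q where "q = 2 * card A"
  define C :: real where "C = real ((2 * q ^ D) ^ k)"
  have qpos: "q > 0" using assms(2) by (simp add: q_def)
  have Cpos: "C > 0" using qpos by (simp add: C_def)
  have key: "0 < card (subgroups_T_le A k n) \<and> 0 < card (tuples_le A k n)
     \<and> real (card (tuples_le A k n)) \<le> C * real (card (subgroups_T_le A k n))" if n: "n \<ge> D" for n
  proof -
    define L where "L = n - D"
    interpret fam A a b k L by unfold_locales (use a b assms(3) in auto)
    have nN: "N = n" unfolding N_def using n by (simp add: L_def D_def)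
    have T1: "card (Rl A L) ^ k \<le> card (subgroups_T_le A k n)"
      using card_T_lower[OF assms(1)] nN by simp
    have c1: "card (tuples_le A k n) = card (reduced_words_le A n) ^ k"
      by (rule card_tuples_le[OF assms(1)])
    have c2: "card (reduced_words_le A n) ^ k \<le> (2 * card (Rl A n)) ^ k"
      by (rule power_mono[OF rwle_bound[OF assms(1) b(2)[symmetric] a b(1)]]) simp
    have c3: "card (Rl A n) \<le> q ^ D * card (Rl A L)"
      using Rl_shift[OF assms(1), of L D] n by (simp add: L_def q_def)
    have c4: "(2 * card (Rl A n)) ^ k \<le> (2 * (q ^ D * card (Rl A L))) ^ k"
      using c3 by (intro power_mono) auto
    have c5: "(2 * (q ^ D * card (Rl A L))) ^ k = (2 * q ^ D) ^ k * card (Rl A L) ^ k"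
      by (simp add: power_mult_distrib mult.assoc)
    have c6: "(2 * q ^ D) ^ k * card (Rl A L) ^ k \<le> (2 * q ^ D) ^ k * card (subgroups_T_le A k n)"
      using T1 by simp
    have ineq: "card (tuples_le A k n) \<le> (2 * q ^ D) ^ k * card (subgroups_T_le A k n)"
      using c1 c2 c4 c5 c6 by linarith
    have "card (Rl A L) ^ k \<ge> 1" using Rl_nonempty[OF assms(1) a] by simp
    then have p1: "0 < card (subgroups_T_le A k n)" using T1 by simp
    have "[] \<in> reduced_words_le A n" by (simp add: reduced_words_le_def reduced_def)
    then have "card (reduced_words_le A n) > 0" using finite_rwle[OF assms(1)] card_gt_0_iff by blast
    then have p2: "0 < card (tuples_le A k n)" using c1 by simp
    have "real (card (tuples_le A k n)) \<le> real ((2 * q ^ D) ^ k * card (subgroups_T_le A k n))"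
      using ineq by (simp only: of_nat_le_iff)
    then show ?thesis using p1 p2 by (simp add: C_def)
  qed
  have sub_tup: "tuples_le A k n \<subseteq> tuples A k" for n
    by (auto simp: tuples_le_def tuples_def reduced_words_le_def reduced_words_def)
  have ev1: "eventually (\<lambda>n. 0 \<le> Qn A k n X \<and> Qn A k n X \<le> C * Pn A k n Y) sequentially"
  proof (rule eventually_sequentiallyI[of D])
    fix n assume n: "D \<le> n"
    define T where "T = subgroups_T_le A k n"
    define U where "U = tuples_le A k n"
    have TU: "T = gen_sub A ` U" by (simp add: T_def U_def subgroups_T_le_def)
    have "U \<inter> gen_sub A -` X = Y \<inter> U" using sub_tup[of n] by (auto simp: Y_def U_def)
    then have cc: "card (X \<inter> T) \<le> card (Y \<inter> U)"
      using preimage_card[OF finite_tuples_le[OF assms(1)], of "gen_sub A" k n X]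
      by (simp add: TU U_def Int_commute)
    show "0 \<le> Qn A k n X \<and> Qn A k n X \<le> C * Pn A k n Y"
      unfolding Qn_def Pn_def T_def[symmetric] U_def[symmetric]
      using ratio[of "real (card T)" "real (card U)" C "real (card (X \<inter> T))" "real (card (Y \<inter> U))"]
        key[OF n] cc by (simp add: T_def U_def)
  qed
  have ev2: "eventually (\<lambda>n. 0 \<le> 1 - Qn A k n X \<and> 1 - Qn A k n X \<le> C * (1 - Pn A k n Y)) sequentially"
  proof (rule eventually_sequentiallyI[of D])
    fix n assume n: "D \<le> n"
    define T where "T = subgroups_T_le A k n"
    define U where "U = tuples_le A k n"
    have fT: "finite T" using finite_tuples_le[OF assms(1)] by (simp add: T_def subgroups_T_le_def)
    have fU: "finite U" using finite_tuples_le[OF assms(1)] by (simp add: U_def)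
    have TU: "T = gen_sub A ` U" by (simp add: T_def U_def subgroups_T_le_def)
    have "U \<inter> gen_sub A -` (- X) = U - Y" using sub_tup[of n] by (auto simp: Y_def U_def)
    then have cc: "card (T - X) \<le> card (U - Y)"
      using preimage_card[OF fU, of "gen_sub A" "- X"]
      by (simp add: TU Diff_eq)
    have k1: "0 < card T" "0 < card U" "real (card U) \<le> C * real (card T)"
      using key[OF n] by (auto simp: T_def U_def)
    have e1: "1 - Qn A k n X = real (card (T - X)) / real (card T)"
      unfolding Qn_def T_def[symmetric] by (rule one_minus_ratio[OF fT k1(1)])
    have e2: "1 - Pn A k n Y = real (card (U - Y)) / real (card U)"
      unfolding Pn_def U_def[symmetric] by (rule one_minus_ratio[OF fU k1(2)])
    show "0 \<le> 1 - Qn A k n X \<and> 1 - Qn A k n X \<le> C * (1 - Pn A k n Y)"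
      unfolding e1 e2
      using ratio[of "real (card T)" "real (card U)" C "real (card (T - X))" "real (card (U - Y))"]
        k1 cc by simp
  qed
  note t1 = transfer[OF ev1 Cpos] and t2 = transfer[OF ev2 Cpos]
  have t3: "(\<lambda>n. Pn A k n Y) \<longlonglongrightarrow> 1 \<longrightarrow> (\<lambda>n. Qn A k n X) \<longlonglongrightarrow> 1"
  proof
    assume "(\<lambda>n. Pn A k n Y) \<longlonglongrightarrow> 1"
    then have "(\<lambda>n. 1 - Pn A k n Y) \<longlonglongrightarrow> 1 - 1" by (intro tendsto_diff tendsto_const)
    then have "(\<lambda>n. 1 - Qn A k n X) \<longlonglongrightarrow> 0" using t2 by simp
    then have "(\<lambda>n. 1 - (1 - Qn A k n X)) \<longlonglongrightarrow> 1 - 0" by (intro tendsto_diff tendsto_const)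
    then show "(\<lambda>n. Qn A k n X) \<longlonglongrightarrow> 1" by simp
  qed
  show ?thesis using t1 t2 t3 by blast
qed

end
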